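(* Let $r\ge 2$ be a constant and $\lambda\le n^r$. Consider $\lambda$ isolated islands (no migration), each independently running the (1+1) EA with mutation probability $1/n$ on $\mathrm{Fork}_{n,r}$ from an independent uniformly random initial string. The expected total number of fitness evaluations (summed over all islands, one per island per round) until all $\lambda$ islands have the optimum is in $\Omega(\lambda n^{2r}\log\lambda)$.
   Context: $\mathrm{Fork}_{n,r}(x)=n+1$ if $x=0^r1^{n-r}$, $n+2$ if $x=1^{n-r}0^r$ (the optimum), and $|x|_1$ otherwise, for $n\ge 2r$. The (1+1) EA: each round create $y$ by flipping each bit of the current $x$ independently with probability $1/n$ and set $x\gets y$ if the fitness of $y$ is at least that of $x$. *)

theory Defs
  imports "HOL-Probability.Probability"
begin

text \<open>Bit strings of length n are lists of booleans; True = 1, False = 0.\<close>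

definition ones :: "bool list \<Rightarrow> nat" where
  "ones x = count_list x True"

definition fork :: "nat \<Rightarrow> nat \<Rightarrow> bool list \<Rightarrow> nat" where
  "fork n r x =
     (if x = replicate r False @ replicate (n - r) True then n + 1
      else if x = replicate (n - r) True @ replicate r False then n + 2
      else ones x)"

definition fork_opt :: "nat \<Rightarrow> nat \<Rightarrow> bool list" where
  "fork_opt n r = replicate (n - r) True @ replicate r False"

text \<open>Source of randomness: independent bits indexed by (island i, round t, position j).
  Round 0 bits are fair coins (uniform initial string); bits of round t+1 are the
  mutation mask of round t+1 (bit j flipped with probability 1/n).\<close>

definition noise :: "nat \<Rightarrow> (nat \<times> nat \<times> nat \<Rightarrow> bool) measure" where
  "noise n = PiM UNIV (\<lambda>(i, t, j).
      measure_pmf (bernoulli_pmf (if t = 0 then 1/2 else 1 / real n)))"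

definition mask :: "nat \<Rightarrow> (nat \<times> nat \<times> nat \<Rightarrow> bool) \<Rightarrow> nat \<Rightarrow> nat \<Rightarrow> bool list" where
  "mask n \<omega> i t = map (\<lambda>j. \<omega> (i, t, j)) [0..<n]"

definition ea_step :: "nat \<Rightarrow> nat \<Rightarrow> bool list \<Rightarrow> bool list \<Rightarrow> bool list" where
  "ea_step n r x m = (let y = map2 (\<noteq>) x m in if fork n r y \<ge> fork n r x then y else x)"

fun island :: "nat \<Rightarrow> nat \<Rightarrow> (nat \<times> nat \<times> nat \<Rightarrow> bool) \<Rightarrow> nat \<Rightarrow> nat \<Rightarrow> bool list" where
  "island n r \<omega> i 0 = mask n \<omega> i 0"
| "island n r \<omega> i (Suc t) = ea_step n r (island n r \<omega> i t) (mask n \<omega> i (Suc t))"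

definition rounds_all :: "nat \<Rightarrow> nat \<Rightarrow> nat \<Rightarrow> (nat \<times> nat \<times> nat \<Rightarrow> bool) \<Rightarrow> ennreal" where
  "rounds_all n r lam \<omega> =
     (if \<exists>t. \<forall>i<lam. island n r \<omega> i t = fork_opt n r
      then of_nat (LEAST t. \<forall>i<lam. island n r \<omega> i t = fork_opt n r) else \<infinity>)"

definition total_evals :: "nat \<Rightarrow> nat \<Rightarrow> nat \<Rightarrow> (nat \<times> nat \<times> nat \<Rightarrow> bool) \<Rightarrow> ennreal" where
  "total_evals n r lam \<omega> = of_nat lam * rounds_all n r lam \<omega>"

end

theory Submission
  imports Defs
begin

lemma PiM_Pi_pmf:
  fixes p :: "'i \<Rightarrow> 'a pmf"
  assumes J: "finite J"
  shows "distr (measure_pmf (Pi_pmf J d p)) (PiM J (\<lambda>i. measure_pmf (p i))) (\<lambda>f. restrict f J)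
           = PiM J (\<lambda>i. measure_pmf (p i))"
proof (rule product_sigma_finite.PiM_eqI)
  interpret product_prob_space "\<lambda>i. measure_pmf (p i)"
    by (intro product_prob_spaceI) (simp add: measure_pmf.prob_space_axioms)
  show "product_sigma_finite (\<lambda>i. measure_pmf (p i))" by unfold_locales
  show "finite J" by fact
  show "sets (distr (measure_pmf (Pi_pmf J d p)) (PiM J (\<lambda>i. measure_pmf (p i))) (\<lambda>f. restrict f J))
        = sets (PiM J (\<lambda>i. measure_pmf (p i)))" by simp
  fix A assume A: "\<And>i. i \<in> J \<Longrightarrow> A i \<in> sets (measure_pmf (p i))"
  have "Pi\<^sub>E J A \<in> sets (PiM J (\<lambda>i. measure_pmf (p i)))"
    by (intro sets_PiM_I_finite) (use J A in auto)
  then have "emeasure (distr (measure_pmf (Pi_pmf J d p)) (PiM J (\<lambda>i. measure_pmf (p i))) (\<lambda>f. restrict f J)) (Pi\<^sub>E J A)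
      = emeasure (measure_pmf (Pi_pmf J d p)) ((\<lambda>f. restrict f J) -` Pi\<^sub>E J A)"
    by (subst emeasure_distr) (auto simp: space_PiM)
  also have "\<dots> = emeasure (measure_pmf (Pi_pmf J d p)) (PiE_dflt J d A)"
    by (intro emeasure_eq_AE AE_pmfI) (auto simp: PiE_dflt_def set_Pi_pmf J)
  also have "\<dots> = (\<Prod>i\<in>J. emeasure (measure_pmf (p i)) (A i))"
    by (simp add: measure_pmf.emeasure_eq_measure measure_Pi_pmf_PiE_dflt J prod_ennreal)
  finally show "emeasure (distr (measure_pmf (Pi_pmf J d p)) (PiM J (\<lambda>i. measure_pmf (p i))) (\<lambda>f. restrict f J)) (Pi\<^sub>E J A)
      = (\<Prod>i\<in>J. emeasure (measure_pmf (p i)) (A i))" .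
qed

lemma bridge:
  fixes p :: "'i \<Rightarrow> bool pmf" and g :: "('i \<Rightarrow> bool) \<Rightarrow> 'b"
  assumes J: "finite J" and loc: "\<And>\<omega>. g \<omega> = g (\<lambda>k. if k \<in> J then \<omega> k else False)"
  shows "{\<omega>. g \<omega> \<in> S} \<in> sets (PiM UNIV (\<lambda>k. measure_pmf (p k)))"
    and "emeasure (PiM UNIV (\<lambda>k. measure_pmf (p k))) {\<omega>. g \<omega> \<in> S}
           = emeasure (measure_pmf (Pi_pmf J False p)) {f. g f \<in> S}"
proof -
  interpret product_prob_space "\<lambda>k. measure_pmf (p k)" UNIV
    by (intro product_prob_spaceI) (simp add: measure_pmf.prob_space_axioms)
  let ?M = "\<lambda>k. measure_pmf (p k)"
  define X where "X = {h \<in> PiE J (\<lambda>_. UNIV). g (\<lambda>k. if k \<in> J then h k else False) \<in> S}"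
  have fin: "finite (PiE J (\<lambda>_. UNIV::bool set))" using J by (simp add: finite_PiE)
  have single: "PiE J (\<lambda>k. {h k}) = {h}" if "h \<in> PiE J (\<lambda>_. UNIV)" for h :: "'i \<Rightarrow> bool"
    using that by (auto simp: PiE_def extensional_def fun_eq_iff)
  have XU: "X = (\<Union>h\<in>X. PiE J (\<lambda>k. {h k}))"
    using single by (auto simp: X_def)
  have Xsets: "X \<in> sets (PiM J ?M)"
  proof -
    have "finite X" using fin by (rule finite_subset[rotated]) (auto simp: X_def)
    moreover have "PiE J (\<lambda>k. {h k}) \<in> sets (PiM J ?M)" for h
      by (intro sets_PiM_I_finite) (use J in auto)
    ultimately have "(\<Union>h\<in>X. PiE J (\<lambda>k. {h k})) \<in> sets (PiM J ?M)"
      by (intro sets.finite_UN) auto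
    then show ?thesis using XU by simp
  qed
  have eq: "{\<omega>. g \<omega> \<in> S} = prod_emb UNIV ?M J X"
  proof -
    have "g (\<lambda>k. if k \<in> J then restrict \<omega> J k else False) = g \<omega>" for \<omega>
      using loc[of \<omega>] by (simp add: restrict_def cong: if_cong)
    then show ?thesis by (auto simp: prod_emb_def X_def space_PiM)
  qed
  show "{\<omega>. g \<omega> \<in> S} \<in> sets (PiM UNIV ?M)"
    unfolding eq by (rule measurable_prod_emb) (auto simp: Xsets)
  have "emeasure (PiM UNIV ?M) {\<omega>. g \<omega> \<in> S} = emeasure (PiM J ?M) X"
    unfolding eq by (rule emeasure_PiM_emb') (auto simp: J Xsets)
  also have "\<dots> = emeasure (distr (measure_pmf (Pi_pmf J False p)) (PiM J ?M) (\<lambda>f. restrict f J)) X"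
    using PiM_Pi_pmf[OF J, of False p] by simp
  also have "\<dots> = emeasure (measure_pmf (Pi_pmf J False p)) ((\<lambda>f. restrict f J) -` X)"
    by (subst emeasure_distr) (auto simp: Xsets space_PiM)
  also have "\<dots> = emeasure (measure_pmf (Pi_pmf J False p)) {f. g f \<in> S}"
  proof (intro emeasure_eq_AE AE_pmfI)
    fix f assume "f \<in> set_pmf (Pi_pmf J False p)"
    then have f: "\<And>k. k \<notin> J \<Longrightarrow> f k = False" by (auto simp: set_Pi_pmf J PiE_dflt_def)
    have "(\<lambda>k. if k \<in> J then f k else False) = f" using f by auto
    then show "(f \<in> (\<lambda>f. restrict f J) -` X) = (f \<in> {f. g f \<in> S})"
      by (auto simp: X_def restrict_def cong: if_cong)
  qed auto
  finally show "emeasure (PiM UNIV ?M) {\<omega>. g \<omega> \<in> S} = emeasure (measure_pmf (Pi_pmf J False p)) {f. g f \<in> S}" .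
qed


definition qq :: "nat \<Rightarrow> nat \<Rightarrow> real" where
  "qq n t = (if t = 0 then 1/2 else 1 / real n)"

definition pp :: "nat \<Rightarrow> nat \<times> nat \<times> nat \<Rightarrow> bool pmf" where
  "pp n k = bernoulli_pmf (qq n (fst (snd k)))"

lemma noise_pp: "noise n = PiM UNIV (\<lambda>k. measure_pmf (pp n k))"
  unfolding noise_def pp_def qq_def
  by (rule arg_cong[where f="PiM UNIV"]) (auto simp: fun_eq_iff split: prod.splits)

definition mp :: "nat \<Rightarrow> nat \<Rightarrow> bool list pmf" where
  "mp n t = map_pmf (\<lambda>f. map f [0..<n]) (Pi_pmf {..<n} False (\<lambda>_. bernoulli_pmf (qq n t)))"

definition rnd :: "nat \<Rightarrow> nat \<Rightarrow> nat \<Rightarrow> (nat \<times> nat \<times> nat) set" where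
  "rnd n i t = {i} \<times> {t} \<times> {..<n}"

definition blk :: "nat \<Rightarrow> nat \<Rightarrow> nat \<Rightarrow> (nat \<times> nat \<times> nat) set" where
  "blk n i t = {i} \<times> {..t} \<times> {..<n}"

definition blkall :: "nat \<Rightarrow> nat \<Rightarrow> nat \<Rightarrow> (nat \<times> nat \<times> nat) set" where
  "blkall n l t = {..<l} \<times> {..t} \<times> {..<n}"

lemma prod_list_map_nth: "prod_list (map f m) = (\<Prod>j<length m. f (m ! j))"
proof -
  have "map f m = map (\<lambda>j. f (m ! j)) [0..<length m]" by (rule nth_equalityI) auto
  then show ?thesis
    by (simp add: prod.distinct_set_conv_list[symmetric] atLeast0LessThan)
qed

lemma pmf_mp: "pmf (mp n t) m = (if length m = n then prod_list (map (pmf (bernoulli_pmf (qq n t))) m) else 0)"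
proof -
  let ?P = "Pi_pmf {..<n} False (\<lambda>_. bernoulli_pmf (qq n t))"
  let ?S = "(\<lambda>f. map f [0..<n]) -` {m}"
  have "pmf (mp n t) m = measure ?P ?S" unfolding mp_def pmf_map ..
  also have "\<dots> = (if length m = n then prod_list (map (pmf (bernoulli_pmf (qq n t))) m) else 0)"
  proof (cases "length m = n")
    case False
    then have "?S = {}" by auto
    then show ?thesis using False by simp
  next
    case True
    define fm where "fm = (\<lambda>j. if j < n then m ! j else False)"
    have "?S \<inter> set_pmf ?P = {fm} \<inter> set_pmf ?P"
    proof (intro equalityI subsetI)
      fix f assume f: "f \<in> ?S \<inter> set_pmf ?P"
      then have "\<And>j. j \<ge> n \<Longrightarrow> f j = False" by (auto simp: set_Pi_pmf PiE_dflt_def)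
      moreover have mf: "map f [0..<n] = m" using f by simp
      moreover have "\<And>j. j < n \<Longrightarrow> f j = m ! j" by (simp add: mf[symmetric])
      ultimately have "f = fm" by (auto simp: fm_def fun_eq_iff not_less)
      then show "f \<in> {fm} \<inter> set_pmf ?P" using f by auto
    next
      fix f assume f: "f \<in> {fm} \<inter> set_pmf ?P"
      then have "f = fm" by simp
      moreover have "map fm [0..<n] = m" by (rule nth_equalityI) (simp_all add: fm_def True)
      ultimately show "f \<in> ?S \<inter> set_pmf ?P" using f by simp
    qed
    then have "measure ?P ?S = measure ?P {fm}" by (metis measure_Int_set_pmf)
    also have "\<dots> = pmf ?P fm" by (simp add: measure_pmf_single)
    also have "\<dots> = (\<Prod>j<n. pmf (bernoulli_pmf (qq n t)) (m ! j))"
      by (subst pmf_Pi) (auto simp: fm_def)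
    also have "\<dots> = prod_list (map (pmf (bernoulli_pmf (qq n t))) m)"
      using True by (simp add: prod_list_map_nth)
    finally show ?thesis using True by simp
  qed
  finally show ?thesis .
qed

definition maskpmf :: "nat \<Rightarrow> nat \<Rightarrow> nat \<Rightarrow> bool list pmf" where
  "maskpmf n i t = map_pmf (\<lambda>f. mask n f i t) (Pi_pmf (rnd n i t) False (pp n))"

lemma maskpmf_eq: "maskpmf n i t = mp n t"
proof -
  have fin: "finite (rnd n i t)" by (simp add: rnd_def)
  have "Pi_pmf (rnd n i t) False (pp n) = Pi_pmf (rnd n i t) False (\<lambda>_. bernoulli_pmf (qq n t))"
    by (rule Pi_pmf_cong) (auto simp: rnd_def pp_def)
  moreover have "Pi_pmf {..<n} False (\<lambda>_. bernoulli_pmf (qq n t))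
      = map_pmf (\<lambda>g. g \<circ> (\<lambda>j. (i, t, j))) (Pi_pmf (rnd n i t) False (\<lambda>_. bernoulli_pmf (qq n t)))"
    by (rule Pi_pmf_bij_betw) (auto simp: rnd_def bij_betw_def inj_on_def image_def)
  ultimately show ?thesis
    unfolding maskpmf_def mp_def by (simp add: pmf.map_comp o_def mask_def)
qed

lemma mask_local:
  assumes "\<And>j. j < n \<Longrightarrow> \<omega> (i, t, j) = \<omega>' (i, t, j)"
  shows "mask n \<omega> i t = mask n \<omega>' i t"
  using assms by (simp add: mask_def)

lemma island_local:
  assumes "\<And>t' j. t' \<le> t \<Longrightarrow> j < n \<Longrightarrow> \<omega> (i, t', j) = \<omega>' (i, t', j)"
  shows "island n r \<omega> i t = island n r \<omega>' i t"
  using assms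
proof (induction t)
  case 0 then show ?case by (simp only: island.simps) (intro mask_local, auto)
next
  case (Suc t)
  have "island n r \<omega> i t = island n r \<omega>' i t" using Suc by simp
  moreover have "mask n \<omega> i (Suc t) = mask n \<omega>' i (Suc t)" using Suc.prems by (intro mask_local) auto
  ultimately show ?case by simp
qed

fun chain :: "nat \<Rightarrow> nat \<Rightarrow> nat \<Rightarrow> bool list pmf" where
  "chain n r 0 = mp n 0"
| "chain n r (Suc t) = bind_pmf (chain n r t) (\<lambda>x. map_pmf (ea_step n r x) (mp n (Suc t)))"

lemma map_pair_bind: "map_pmf (\<lambda>(a, b). h a b) (pair_pmf A B) = bind_pmf A (\<lambda>a. map_pmf (h a) B)"
  by (simp add: pair_pmf_def map_bind_pmf map_pmf_def bind_assoc_pmf bind_return_pmf)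

lemma island_dist:
  "map_pmf (\<lambda>f. island n r f i t) (Pi_pmf (blk n i t) False (pp n)) = chain n r t"
proof (induction t)
  case 0
  have "blk n i 0 = rnd n i 0" by (auto simp: blk_def rnd_def)
  then show ?case using maskpmf_eq[of n i 0] by (simp add: maskpmf_def)
next
  case (Suc t)
  have un: "blk n i (Suc t) = blk n i t \<union> rnd n i (Suc t)"
    by (auto simp: blk_def rnd_def le_Suc_eq)
  have fin: "finite (blk n i t)" "finite (rnd n i (Suc t))" by (auto simp: blk_def rnd_def)
  have dj: "blk n i t \<inter> rnd n i (Suc t) = {}" by (auto simp: blk_def rnd_def)
  let ?mg = "\<lambda>(f, g) x. if x \<in> blk n i t then f x else g x"
  have "map_pmf (\<lambda>f. island n r f i (Suc t)) (Pi_pmf (blk n i (Suc t)) False (pp n))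
      = map_pmf (\<lambda>f. island n r f i (Suc t)) (map_pmf ?mg (pair_pmf (Pi_pmf (blk n i t) False (pp n)) (Pi_pmf (rnd n i (Suc t)) False (pp n))))"
    unfolding un by (subst Pi_pmf_union) (use fin dj in auto)
  also have "\<dots> = map_pmf (\<lambda>(f, g). ea_step n r (island n r f i t) (mask n g i (Suc t)))
       (pair_pmf (Pi_pmf (blk n i t) False (pp n)) (Pi_pmf (rnd n i (Suc t)) False (pp n)))"
    unfolding pmf.map_comp
  proof (intro map_pmf_cong refl)
    fix x assume "x \<in> set_pmf (pair_pmf (Pi_pmf (blk n i t) False (pp n)) (Pi_pmf (rnd n i (Suc t)) False (pp n)))"
    obtain f g where x: "x = (f, g)" by (cases x)
    have "island n r (?mg (f, g)) i t = island n r f i t"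
      by (intro island_local) (auto simp: blk_def)
    moreover have "mask n (?mg (f, g)) i (Suc t) = mask n g i (Suc t)"
      by (intro mask_local) (auto simp: blk_def)
    ultimately show "((\<lambda>f. island n r f i (Suc t)) \<circ> ?mg) x = (\<lambda>(f, g). ea_step n r (island n r f i t) (mask n g i (Suc t))) x"
      by (simp add: x)
  qed
  also have "\<dots> = map_pmf (\<lambda>(x, m). ea_step n r x m)
      (map_pmf (\<lambda>(f, g). (island n r f i t, mask n g i (Suc t)))
       (pair_pmf (Pi_pmf (blk n i t) False (pp n)) (Pi_pmf (rnd n i (Suc t)) False (pp n))))"
    by (simp add: pmf.map_comp o_def case_prod_unfold)
  also have "\<dots> = map_pmf (\<lambda>(x, m). ea_step n r x m) (pair_pmf (chain n r t) (mp n (Suc t)))"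
    by (subst map_pair) (simp add: Suc.IH maskpmf_eq[of n i "Suc t", unfolded maskpmf_def])
  also have "\<dots> = chain n r (Suc t)"
    by (simp add: map_pair_bind)
  finally show ?case .
qed

lemma prob_pair_times:
  "measure (measure_pmf (pair_pmf M N)) (A \<times> B) = measure (measure_pmf M) A * measure (measure_pmf N) B"
proof -
  have "A \<times> B = (\<lambda>(a, b). (a \<in> A, b \<in> B)) -` {(True, True)}" by auto
  then have "measure (measure_pmf (pair_pmf M N)) (A \<times> B)
      = pmf (map_pmf (\<lambda>(a, b). (a \<in> A, b \<in> B)) (pair_pmf M N)) (True, True)"
    by (simp add: pmf_map)
  also have "\<dots> = pmf (pair_pmf (map_pmf (\<lambda>a. a \<in> A) M) (map_pmf (\<lambda>b. b \<in> B) N)) (True, True)"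
    by (subst map_pair[symmetric]) simp
  also have "\<dots> = measure (measure_pmf M) A * measure (measure_pmf N) B"
    by (simp add: pmf_pair pmf_map vimage_def)
  finally show ?thesis .
qed

definition mrg :: "'a set \<Rightarrow> ('a \<Rightarrow> 'b) \<Rightarrow> ('a \<Rightarrow> 'b) \<Rightarrow> 'a \<Rightarrow> 'b" where
  "mrg A f g = (\<lambda>x. if x \<in> A then f x else g x)"

lemma Pi_pmf_union_mrg:
  assumes "finite A" "finite B" "A \<inter> B = {}"
  shows "Pi_pmf (A \<union> B) dflt p = map_pmf (\<lambda>(f, g). mrg A f g) (pair_pmf (Pi_pmf A dflt p) (Pi_pmf B dflt p))"
  using Pi_pmf_union[OF assms, of dflt p] by (simp add: mrg_def[abs_def])

lemma all_dist:
  "measure (measure_pmf (Pi_pmf (blkall n l t) False (pp n))) {f. \<forall>i<l. island n r f i t = y}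
     = pmf (chain n r t) y ^ l"
proof (induction l)
  case 0
  have "{f. \<forall>i<(0::nat). island n r f i t = y} = UNIV" by auto
  then show ?case by simp
next
  case (Suc l)
  have un: "blkall n (Suc l) t = blkall n l t \<union> blk n l t"
    by (auto simp: blkall_def blk_def less_Suc_eq)
  have fin: "finite (blkall n l t)" "finite (blk n l t)" by (auto simp: blkall_def blk_def)
  have dj: "blkall n l t \<inter> blk n l t = {}" by (auto simp: blkall_def blk_def)
  let ?mg = "\<lambda>(f, g). mrg (blkall n l t) f g"
  have A: "island n r (mrg (blkall n l t) f g) i t = island n r f i t" if "i < l" for f g i
    using that by (intro island_local) (auto simp: blkall_def mrg_def)
  have B: "island n r (mrg (blkall n l t) f g) l t = island n r g l t" for f g
    by (intro island_local) (auto simp: blkall_def mrg_def)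
  have pre: "?mg -` {f. \<forall>i<Suc l. island n r f i t = y}
     = {f. \<forall>i<l. island n r f i t = y} \<times> {g. island n r g l t = y}"
    using A B by (auto simp: less_Suc_eq)
  have "measure (measure_pmf (Pi_pmf (blkall n (Suc l) t) False (pp n))) {f. \<forall>i<Suc l. island n r f i t = y}
     = measure (measure_pmf (pair_pmf (Pi_pmf (blkall n l t) False (pp n)) (Pi_pmf (blk n l t) False (pp n))))
         (?mg -` {f. \<forall>i<Suc l. island n r f i t = y})"
    unfolding un by (subst Pi_pmf_union_mrg) (use fin dj in auto)
  also have "\<dots> = pmf (chain n r t) y ^ l * measure (measure_pmf (Pi_pmf (blk n l t) False (pp n))) {g. island n r g l t = y}"
    by (simp only: pre prob_pair_times Suc.IH)
  also have "measure (measure_pmf (Pi_pmf (blk n l t) False (pp n))) {g. island n r g l t = y} = pmf (chain n r t) y"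
  proof -
    have "pmf (chain n r t) y = pmf (map_pmf (\<lambda>f. island n r f l t) (Pi_pmf (blk n l t) False (pp n))) y"
      by (simp only: island_dist)
    then show ?thesis by (simp add: pmf_map vimage_def)
  qed
  finally show ?case by simp
qed


lemma ones_card: "ones x = card {i. i < length x \<and> x ! i}"
  unfolding ones_def count_list_eq_length_filter length_filter_conv_card
  by (metis (full_types))

lemma count_list_replicate: "count_list (replicate k a) b = (if a = b then k else 0)"
  by (induct k) auto

lemma ones_le: "ones x \<le> length x"
  unfolding ones_def by (rule count_le_length)

lemma ones_rev[simp]: "ones (rev x) = ones x"
  by (simp add: ones_def)

lemma intg: "(\<And>x. \<bar>f x\<bar> \<le> C) \<Longrightarrow> integrable (measure_pmf p) (f :: _ \<Rightarrow> real)"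
  by (rule measure_pmf.integrable_const_bound[where B=C]) auto

lemma integral_bind_pmf_bounded:
  fixes f :: "'b \<Rightarrow> real"
  assumes nn: "\<And>x. 0 \<le> f x" and bd: "\<And>x. f x \<le> C"
  shows "(\<integral>x. f x \<partial>bind_pmf P K) = (\<integral>x. (\<integral>y. f y \<partial>K x) \<partial>P)"
proof -
  have i1: "integrable (measure_pmf Q) f" for Q
    by (rule intg[where C=C]) (use nn bd in auto)
  have inn: "0 \<le> (\<integral>y. f y \<partial>K x)" for x using nn by simp
  have ibd: "(\<integral>y. f y \<partial>K x) \<le> C" for x
  proof -
    have "(\<integral>y. f y \<partial>K x) \<le> (\<integral>y. C \<partial>K x)" by (intro integral_mono i1) (auto simp: bd)
    then show ?thesis by simp
  qed
  have i2: "integrable (measure_pmf P) (\<lambda>x. \<integral>y. f y \<partial>K x)"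
    by (rule intg[where C=C]) (use inn ibd in auto)
  have "ennreal (\<integral>x. f x \<partial>bind_pmf P K) = (\<integral>\<^sup>+x. ennreal (f x) \<partial>bind_pmf P K)"
    by (rule nn_integral_eq_integral[symmetric]) (use i1 nn in auto)
  also have "\<dots> = (\<integral>\<^sup>+x. \<integral>\<^sup>+y. ennreal (f y) \<partial>K x \<partial>P)" by simp
  also have "\<dots> = (\<integral>\<^sup>+x. ennreal (\<integral>y. f y \<partial>K x) \<partial>P)"
    by (intro nn_integral_cong nn_integral_eq_integral) (use i1 nn in auto)
  also have "\<dots> = ennreal (\<integral>x. (\<integral>y. f y \<partial>K x) \<partial>P)"
    by (rule nn_integral_eq_integral) (use i2 inn in auto)
  finally show ?thesis using nn inn by (simp add: ennreal_inj Bochner_Integration.integral_nonneg)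
qed

locale fctx =
  fixes n r :: nat
  assumes r1: "1 \<le> r" and rn: "2 * r < n"
begin

definition fA :: "bool list" where "fA = replicate r False @ replicate (n - r) True"
definition fB :: "bool list" where "fB = replicate (n - r) True @ replicate r False"
definition sp :: "bool list \<Rightarrow> bool" where "sp x \<longleftrightarrow> x = fA \<or> x = fB"

lemma len_fA[simp]: "length fA = n" and len_fB[simp]: "length fB = n"
  using rn by (auto simp: fA_def fB_def)

lemma nth_fA: "j < n \<Longrightarrow> fA ! j = (r \<le> j)"
  using rn by (auto simp: fA_def nth_append)

lemma nth_fB: "j < n \<Longrightarrow> fB ! j = (j < n - r)"
  using rn by (auto simp: fB_def nth_append)

lemma fA_ne_fB[simp]: "fA \<noteq> fB" "fB \<noteq> fA"
proof -
  have "fA ! 0 \<noteq> fB ! 0" using rn r1 by (simp add: nth_fA nth_fB)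
  then show "fA \<noteq> fB" "fB \<noteq> fA" by auto
qed

lemma rev_fA[simp]: "rev fA = fB" and rev_fB[simp]: "rev fB = fA"
  by (simp_all add: fA_def fB_def)

lemma ones_fA: "ones fA = n - r" and ones_fB: "ones fB = n - r"
  by (simp_all add: fA_def fB_def ones_def count_list_replicate)

lemma fork_eq: "fork n r x = (if x = fA then n + 1 else if x = fB then n + 2 else ones x)"
  by (simp add: fork_def fA_def fB_def)

lemma fork_opt_eq: "fork_opt n r = fB"
  by (simp add: fork_opt_def fB_def)

lemma fork_ns: "\<not> sp x \<Longrightarrow> fork n r x = ones x"
  by (simp add: fork_eq sp_def)

lemma sp_rev[simp]: "sp (rev x) = sp x"
  unfolding sp_def by (metis rev_fA rev_fB rev_rev_ident)

lemma fork_le: "length x = n \<Longrightarrow> fork n r x \<le> n + 2"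
  using ones_le[of x] by (simp add: fork_eq)

lemma len_step: "length x = n \<Longrightarrow> length m = n \<Longrightarrow> length (ea_step n r x m) = n"
  by (simp add: ea_step_def Let_def)

lemma nth_xor: "length x = n \<Longrightarrow> length m = n \<Longrightarrow> j < n \<Longrightarrow> map2 (\<noteq>) x m ! j = (x ! j \<noteq> m ! j)"
  by simp

lemma step_fB: "length m = n \<Longrightarrow> ea_step n r fB m = fB"
proof -
  assume m: "length m = n"
  let ?y = "map2 (\<noteq>) fB m"
  have "length ?y = n" using m by simp
  then have "fork n r ?y \<ge> fork n r fB \<Longrightarrow> ?y = fB"
    using ones_le[of ?y] by (auto simp: fork_eq split: if_splits)
  then show ?thesis by (auto simp: ea_step_def Let_def)
qed

lemma step_fA: "length m = n \<Longrightarrow> ea_step n r fA m = (if map2 (\<noteq>) fA m = fB then fB else fA)"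
proof -
  assume m: "length m = n"
  let ?y = "map2 (\<noteq>) fA m"
  have "length ?y = n" using m by simp
  then have "fork n r ?y \<ge> fork n r fA \<Longrightarrow> ?y = fB \<or> ?y = fA"
    using ones_le[of ?y] by (auto simp: fork_eq split: if_splits)
  then show ?thesis by (auto simp: ea_step_def Let_def fork_eq)
qed

lemma step_sp: "length m = n \<Longrightarrow> sp x \<Longrightarrow> sp (ea_step n r x m)"
  using step_fA step_fB by (auto simp: sp_def)

lemma step_rev:
  assumes x: "length x = n" and m: "length m = n" and ns: "\<not> sp x"
  shows "ea_step n r (rev x) (rev m) = rev (ea_step n r x m)"
proof -
  let ?y = "map2 (\<noteq>) x m"
  have y: "map2 (\<noteq>) (rev x) (rev m) = rev ?y" using x m by (simp add: zip_rev rev_map)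
  have fx: "fork n r (rev x) = fork n r x" using ns by (simp add: fork_ns)
  have lx: "fork n r x \<le> n" using ns ones_le[of x] x by (simp add: fork_ns)
  have "(fork n r (rev ?y) \<ge> fork n r (rev x)) = (fork n r ?y \<ge> fork n r x)"
  proof (cases "sp ?y")
    case True
    then have "fork n r (rev ?y) \<ge> n + 1" "fork n r ?y \<ge> n + 1"
      by (auto simp: sp_def fork_eq)
    then show ?thesis using lx fx by auto
  next
    case False
    then show ?thesis using fx by (simp add: fork_ns)
  qed
  then show ?thesis unfolding ea_step_def Let_def y by auto
qed


definition K :: "bool list \<Rightarrow> bool list pmf" where "K x = map_pmf (ea_step n r x) (mp n 1)"
definition cc :: "bool list \<Rightarrow> bool list" where "cc x = (if x = fB then fA else x)"

lemma set_mp: "m \<in> set_pmf (mp n t) \<Longrightarrow> length m = n"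
  by (auto simp: set_pmf_iff pmf_mp split: if_splits)

lemma mp_Suc: "mp n (Suc t) = mp n 1" unfolding mp_def qq_def by simp

lemma mp_rev: "map_pmf rev (mp n t) = mp n t"
proof (rule pmf_eqI)
  fix m
  have "pmf (map_pmf rev (mp n t)) m = pmf (map_pmf rev (mp n t)) (rev (rev m))" by simp
  also have "\<dots> = pmf (mp n t) (rev m)" by (rule pmf_map_inj') simp
  also have "\<dots> = pmf (mp n t) m"
  proof -
    have "prod_list (map f (rev m)) = prod_list (map f m)" for f :: "bool \<Rightarrow> real"
      by (metis prod_list.rev rev_map)
    then show ?thesis by (simp add: pmf_mp)
  qed
  finally show "pmf (map_pmf rev (mp n t)) m = pmf (mp n t) m" .
qed

lemma chain_len: "x \<in> set_pmf (chain n r t) \<Longrightarrow> length x = n"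
proof (induction t arbitrary: x)
  case 0 then show ?case by (simp add: set_mp)
next
  case (Suc t)
  then obtain y m where "y \<in> set_pmf (chain n r t)" "m \<in> set_pmf (mp n (Suc t))" "x = ea_step n r y m"
    by auto
  moreover have "length y = n" using Suc.IH \<open>y \<in> set_pmf (chain n r t)\<close> by simp
  moreover have "length m = n" using set_mp \<open>m \<in> set_pmf (mp n (Suc t))\<close> by simp
  ultimately show ?case using len_step by simp
qed

lemma chain_Suc': "chain n r (Suc t) = bind_pmf (chain n r t) K"
  using mp_Suc[of t] by (simp add: K_def[abs_def])

lemma K_sp: assumes "sp x" shows "map_pmf cc (K x) = return_pmf fA"
proof -
  have "\<forall>m \<in> set_pmf (mp n 1). cc (ea_step n r x m) = fA"
    using step_sp[OF _ assms] by (auto simp: cc_def sp_def dest: set_mp)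
  then show ?thesis by (simp add: K_def pmf.map_comp o_def map_pmf_eq_return_pmf_iff)
qed

lemma K_sp_rev: assumes "sp x" shows "map_pmf (cc \<circ> rev) (K x) = return_pmf fA"
proof -
  have "\<forall>m \<in> set_pmf (mp n 1). cc (rev (ea_step n r x m)) = fA"
  proof
    fix m assume "m \<in> set_pmf (mp n 1)"
    then have "sp (ea_step n r x m)" using step_sp[OF _ assms] set_mp by blast
    then have "sp (rev (ea_step n r x m))" by simp
    then show "cc (rev (ea_step n r x m)) = fA" by (auto simp: cc_def sp_def)
  qed
  then show ?thesis by (simp add: K_def pmf.map_comp o_def map_pmf_eq_return_pmf_iff)
qed

lemma K_rev:
  assumes lx: "length x = n" and ns: "\<not> sp x"
  shows "K (rev x) = map_pmf rev (K x)"
proof -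
  have "K (rev x) = map_pmf (ea_step n r (rev x)) (map_pmf rev (mp n 1))"
    unfolding K_def mp_rev ..
  also have "\<dots> = map_pmf (\<lambda>m. ea_step n r (rev x) (rev m)) (mp n 1)"
    by (simp add: pmf.map_comp o_def)
  also have "\<dots> = map_pmf (\<lambda>m. rev (ea_step n r x m)) (mp n 1)"
  proof (intro map_pmf_cong refl)
    fix m assume "m \<in> set_pmf (mp n 1)"
    then have "length m = n" by (rule set_mp)
    then show "ea_step n r (rev x) (rev m) = rev (ea_step n r x m)" using step_rev[OF lx _ ns] by simp
  qed
  finally show ?thesis by (simp add: K_def pmf.map_comp o_def)
qed

lemma sym_chain: "map_pmf (cc \<circ> rev) (chain n r t) = map_pmf cc (chain n r t)"
proof (induction t)
  case 0
  show ?case by (metis chain.simps(1) mp_rev pmf.map_comp)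
next
  case (Suc t)
  define L where "L z = (if sp z then return_pmf fA else map_pmf cc (K z))" for z
  have L1: "map_pmf cc (K x) = L (cc x)" if "x \<in> set_pmf (chain n r t)" for x
  proof (cases "sp x")
    case True then have "cc x = fA" "sp fA" by (auto simp: cc_def sp_def)
    then show ?thesis using K_sp[OF True] by (simp add: L_def)
  next
    case False then have "cc x = x" by (auto simp: cc_def sp_def)
    then show ?thesis using False by (simp add: L_def)
  qed
  have L2: "map_pmf (cc \<circ> rev) (K x) = L (cc (rev x))" if "x \<in> set_pmf (chain n r t)" for x
  proof (cases "sp x")
    case True then have "cc (rev x) = fA" "sp fA" by (auto simp: cc_def sp_def)
    then show ?thesis using K_sp_rev[OF True] by (simp add: L_def)
  next
    case False
    then have ns: "\<not> sp (rev x)" by simp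
    then have c: "cc (rev x) = rev x" by (auto simp: cc_def sp_def)
    have lx: "length x = n" using that chain_len by auto
    show ?thesis using ns c K_rev[OF lx False] by (simp add: L_def pmf.map_comp)
  qed
  have "map_pmf (cc \<circ> rev) (chain n r (Suc t)) = bind_pmf (chain n r t) (\<lambda>x. map_pmf (cc \<circ> rev) (K x))"
    by (simp only: chain_Suc' map_bind_pmf)
  also have "\<dots> = bind_pmf (chain n r t) (\<lambda>x. L (cc (rev x)))"
    by (intro bind_pmf_cong refl L2)
  also have "\<dots> = bind_pmf (map_pmf (cc \<circ> rev) (chain n r t)) L" by (simp only: bind_map_pmf o_def)
  also have "\<dots> = bind_pmf (map_pmf cc (chain n r t)) L" by (simp only: Suc.IH)
  also have "\<dots> = bind_pmf (chain n r t) (\<lambda>x. L (cc x))" by (simp only: bind_map_pmf)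
  also have "\<dots> = bind_pmf (chain n r t) (\<lambda>x. map_pmf cc (K x))" by (intro bind_pmf_cong refl L1[symmetric])
  also have "\<dots> = map_pmf cc (chain n r (Suc t))" by (simp only: chain_Suc' map_bind_pmf)
  finally show ?case .
qed

definition pD :: real where "pD = pmf (K fA) fB"
definition aa :: "nat \<Rightarrow> real" where "aa t = pmf (chain n r t) fA"
definition bb :: "nat \<Rightarrow> real" where "bb t = pmf (chain n r t) fB"

lemma K_fB: "K fB = return_pmf fB"
proof -
  have "\<forall>m \<in> set_pmf (mp n 1). ea_step n r fB m = fB"
  proof
    fix m assume "m \<in> set_pmf (mp n 1)"
    then have "length m = n" by (rule set_mp)
    then show "ea_step n r fB m = fB" by (rule step_fB)
  qed
  then show ?thesis by (simp add: K_def map_pmf_eq_return_pmf_iff)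
qed

lemma set_K_fA: "set_pmf (K fA) \<subseteq> {fA, fB}"
proof -
  have "ea_step n r fA m \<in> {fA, fB}" if "m \<in> set_pmf (mp n 1)" for m
  proof -
    have "length m = n" using that by (rule set_mp)
    then show ?thesis using step_fA by simp
  qed
  then show ?thesis by (auto simp: K_def)
qed

lemma K_fA_fA: "pmf (K fA) fA = 1 - pD"
proof -
  have "measure (measure_pmf (K fA)) {fA, fB} = measure (measure_pmf (K fA)) UNIV"
    by (metis measure_Int_set_pmf set_K_fA Int_absorb1 Int_UNIV_left)
  then have "pmf (K fA) fA + pmf (K fA) fB = 1"
    by (simp add: measure_measure_pmf_finite)
  then show ?thesis by (simp add: pD_def)
qed

lemma pD_nn: "0 \<le> pD" and pD_le1: "pD \<le> 1"
  by (simp_all add: pD_def pmf_le_1)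

lemma aa_le1: "aa t \<le> 1" and aa_nn: "0 \<le> aa t"
  by (simp_all add: aa_def pmf_le_1)

definition II :: "nat \<Rightarrow> real" where "II t = (\<integral>x. (if sp x then 0 else pmf (K x) fA) \<partial>chain n r t)"
definition II' :: "nat \<Rightarrow> real" where "II' t = (\<integral>x. (if sp x then 0 else pmf (K x) fB) \<partial>chain n r t)"

lemma abs_if_pmf: "\<bar>(if b then 0 else pmf p y)\<bar> \<le> 1"
  by (simp add: pmf_le_1)

lemma rec_a: "aa (Suc t) = II t + (1 - pD) * aa t"
proof -
  have "aa (Suc t) = (\<integral>x. pmf (K x) fA \<partial>chain n r t)"
    by (simp add: aa_def chain_Suc' pmf_bind del: chain.simps)
  also have "\<dots> = (\<integral>x. (if sp x then 0 else pmf (K x) fA) + (1 - pD) * indicator {fA} x \<partial>chain n r t)"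
    by (intro Bochner_Integration.integral_cong refl) (auto simp: sp_def K_fA_fA K_fB indicator_def)
  also have "\<dots> = II t + (1 - pD) * aa t"
  proof (subst Bochner_Integration.integral_add)
    show "integrable (measure_pmf (chain n r t)) (\<lambda>x. if sp x then 0 else pmf (K x) fA)"
      by (rule intg[where C=1]) (rule abs_if_pmf)
    show "integrable (measure_pmf (chain n r t)) (\<lambda>x. (1 - pD) * indicator {fA} x)"
      by (rule intg[where C=1]) (use pD_nn pD_le1 in \<open>auto simp: indicator_def\<close>)
  qed (simp add: II_def aa_def measure_pmf_single)
  finally show ?thesis .
qed

lemma rec_b: "bb (Suc t) = II' t + pD * aa t + bb t"
proof -
  have "bb (Suc t) = (\<integral>x. pmf (K x) fB \<partial>chain n r t)"
    by (simp add: bb_def chain_Suc' pmf_bind del: chain.simps)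
  also have "\<dots> = (\<integral>x. ((if sp x then 0 else pmf (K x) fB) + pD * indicator {fA} x) + indicator {fB} x \<partial>chain n r t)"
    by (intro Bochner_Integration.integral_cong refl) (auto simp: sp_def pD_def K_fB indicator_def)
  also have "\<dots> = II' t + pD * aa t + bb t"
  proof (subst Bochner_Integration.integral_add)
    show "integrable (measure_pmf (chain n r t)) (\<lambda>x. (if sp x then 0 else pmf (K x) fB) + pD * indicator {fA} x)"
    proof (rule intg[where C=2])
      fix x
      have "pmf (K x) fB \<le> 1" by (rule pmf_le_1)
      then show "\<bar>(if sp x then 0 else pmf (K x) fB) + pD * indicator {fA} x\<bar> \<le> 2"
        using pD_nn pD_le1 by (auto simp: indicator_def)
    qed
    show "integrable (measure_pmf (chain n r t)) (\<lambda>x. indicator {fB} x :: real)"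
      by (rule intg[where C=1]) (auto simp: indicator_def)
    show "(\<integral>x. (if sp x then 0 else pmf (K x) fB) + pD * indicator {fA} x \<partial>chain n r t)
          + (\<integral>x. indicator {fB} x \<partial>chain n r t) = II' t + pD * aa t + bb t"
    proof (subst Bochner_Integration.integral_add)
      show "integrable (measure_pmf (chain n r t)) (\<lambda>x. if sp x then 0 else pmf (K x) fB)"
        by (rule intg[where C=1]) (rule abs_if_pmf)
      show "integrable (measure_pmf (chain n r t)) (\<lambda>x. pD * indicator {fA} x)"
        by (rule intg[where C=1]) (use pD_nn pD_le1 in \<open>auto simp: indicator_def\<close>)
    qed (simp add: II'_def aa_def bb_def measure_pmf_single)
  qed
  finally show ?thesis .
qed

lemma II_eq: "II t = II' t"
proof -
  define Phi where "Phi z = (if sp z then 0 else pmf (K z) fA)" for z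
  have "II t = (\<integral>x. Phi (cc x) \<partial>chain n r t)"
    unfolding II_def by (intro Bochner_Integration.integral_cong refl) (auto simp: Phi_def cc_def sp_def)
  also have "\<dots> = (\<integral>z. Phi z \<partial>map_pmf cc (chain n r t))" by simp
  also have "\<dots> = (\<integral>z. Phi z \<partial>map_pmf (cc \<circ> rev) (chain n r t))" by (simp only: sym_chain)
  also have "\<dots> = (\<integral>x. Phi (cc (rev x)) \<partial>chain n r t)" by simp
  also have "\<dots> = II' t" unfolding II'_def
  proof (intro integral_cong_AE AE_pmfI)
    fix x assume x: "x \<in> set_pmf (chain n r t)"
    then have lx: "length x = n" by (rule chain_len)
    show "Phi (cc (rev x)) = (if sp x then 0 else pmf (K x) fB)"
    proof (cases "sp x")
      case True
      then have "sp (rev x)" by simp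
      then have "cc (rev x) = fA" by (auto simp: cc_def sp_def)
      then show ?thesis using True by (simp add: Phi_def sp_def)
    next
      case False
      then have ns: "\<not> sp (rev x)" by simp
      then have c: "cc (rev x) = rev x" by (auto simp: cc_def sp_def)
      have "pmf (K (rev x)) fA = pmf (map_pmf rev (K x)) (rev fB)" using K_rev[OF lx False] by simp
      also have "\<dots> = pmf (K x) fB" by (rule pmf_map_inj') simp
      finally show ?thesis using ns c False by (simp add: Phi_def)
    qed
  qed auto
  finally show ?thesis .
qed

lemma bb0: "bb 0 = aa 0"
proof -
  have "bb 0 = pmf (map_pmf rev (mp n 0)) (rev fA)" by (simp add: bb_def mp_rev)
  also have "\<dots> = pmf (mp n 0) fA" by (rule pmf_map_inj') simp
  finally show ?thesis by (simp add: aa_def)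
qed

lemma diff_le: "bb t - aa t \<le> 2 * pD * t"
proof (induction t)
  case 0 then show ?case by (simp add: bb0)
next
  case (Suc t)
  have "bb (Suc t) - aa (Suc t) = bb t - aa t + 2 * pD * aa t"
    using rec_a[of t] rec_b[of t] II_eq[of t] by (simp add: algebra_simps)
  also have "\<dots> \<le> 2 * pD * t + 2 * pD"
    using Suc.IH mult_left_mono[OF aa_le1[of t], of "2 * pD"] pD_nn by linarith
  finally show ?case by (simp add: algebra_simps)
qed

lemma II_nn: "0 \<le> II t"
  unfolding II_def by (intro Bochner_Integration.integral_nonneg) auto

lemma aa_Suc_ge: "(1 - pD) * aa t \<le> aa (Suc t)"
  using rec_a[of t] II_nn[of t] by simp

lemma aa_add: "(1 - pD) ^ k * aa s \<le> aa (s + k)"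
proof (induction k)
  case 0 then show ?case by simp
next
  case (Suc k)
  have "(1 - pD) ^ Suc k * aa s = (1 - pD) * ((1 - pD) ^ k * aa s)" by simp
  also have "\<dots> \<le> (1 - pD) * aa (s + k)"
    by (rule mult_left_mono[OF Suc.IH]) (use pD_le1 in simp)
  also have "\<dots> \<le> aa (s + Suc k)" using aa_Suc_ge[of "s + k"] by simp
  finally show ?case .
qed

end


context fctx begin

lemma n_pos: "0 < n" and n_ge: "3 \<le> n" using r1 rn by auto

lemma pmf_bern_n: "pmf (bernoulli_pmf (qq n 1)) True = 1 / real n" "pmf (bernoulli_pmf (qq n 1)) False = 1 - 1 / real n"
  "pmf (bernoulli_pmf (qq n (Suc 0))) True = 1 / real n" "pmf (bernoulli_pmf (qq n (Suc 0))) False = 1 - 1 / real n"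
  using n_pos by (simp_all add: qq_def)

definition DD :: "bool list" where "DD = replicate r True @ replicate (n - 2*r) False @ replicate r True"

lemma len_DD: "length DD = n" using rn by (simp add: DD_def)

lemma nth_DD: "j < n \<Longrightarrow> DD ! j = (j < r \<or> n - r \<le> j)"
  using rn by (auto simp: DD_def nth_append)

lemma pmf_DD: "pmf (mp n 1) DD = (1/real n)^r * ((1 - 1/real n)^(n - 2*r) * (1/real n)^r)"
  by (simp add: pmf_mp len_DD) (simp add: DD_def pmf_bern_n)

lemma pD_le: "pD \<le> (1 / real n) ^ (2*r)"
proof -
  let ?S = "{m. ea_step n r fA m = fB}"
  have "pD = measure (mp n 1) ?S" by (simp add: pD_def K_def pmf_map vimage_def)
  also have "\<dots> = measure (mp n 1) (?S \<inter> set_pmf (mp n 1))" by (simp add: measure_Int_set_pmf)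
  also have "\<dots> \<le> measure (mp n 1) {DD}"
  proof (rule measure_pmf.finite_measure_mono)
    show "?S \<inter> set_pmf (mp n 1) \<subseteq> {DD}"
    proof
      fix m assume m: "m \<in> ?S \<inter> set_pmf (mp n 1)"
      then have lm: "length m = n" using set_mp by auto
      have eq: "map2 (\<noteq>) fA m = fB" using m step_fA[OF lm] by (auto split: if_splits)
      have "m ! j = DD ! j" if j: "j < n" for j
      proof -
        have "map2 (\<noteq>) fA m ! j = fB ! j" using eq by simp
        then have "(fA ! j \<noteq> m ! j) = fB ! j" using j lm by simp
        then show ?thesis using j rn by (auto simp: nth_fA nth_fB nth_DD)
      qed
      then have "m = DD" by (intro nth_equalityI) (auto simp: lm len_DD)
      then show "m \<in> {DD}" by simp
    qed
  qed simp
  also have "\<dots> = (1/real n)^r * ((1 - 1/real n)^(n - 2*r) * (1/real n)^r)"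
    by (simp only: measure_pmf_single pmf_DD)
  also have "\<dots> \<le> (1/real n)^r * (1 * (1/real n)^r)"
    by (intro mult_left_mono mult_right_mono power_le_one) (use n_pos in auto)
  also have "\<dots> = (1 / real n) ^ (2*r)" by (simp add: power_add[symmetric] mult_2)
  finally show ?thesis .
qed

definition V :: "bool list \<Rightarrow> real" where "V x = (if sp x then 0 else 2 ^ (n - ones x))"
definition ppi :: real where "ppi = (1 / real n) ^ r * (1 - 1 / real n) ^ n"

lemma V_nn: "0 \<le> V x" by (simp add: V_def)
lemma V_le: "V x \<le> 2 ^ n" by (auto simp: V_def intro: power_increasing)
lemma V_abs: "\<bar>V x\<bar> \<le> 2 ^ n" using V_nn[of x] V_le[of x] by simp

lemma ppi_nn: "0 \<le> ppi" and ppi_le1: "ppi \<le> 1"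
proof -
  have a: "0 \<le> 1 - 1 / real n" "1 - 1 / real n \<le> 1" "0 \<le> 1 / real n" "1 / real n \<le> 1"
    using n_pos by auto
  show "0 \<le> ppi" using a by (simp add: ppi_def)
  have "ppi \<le> 1 * 1" unfolding ppi_def
    by (intro mult_mono power_le_one) (use a in auto)
  then show "ppi \<le> 1" by simp
qed

lemma fork_ge_ones: "length y = n \<Longrightarrow> ones y \<le> fork n r y"
  using ones_le[of y] by (auto simp: fork_eq)

lemma V_step_le:
  assumes lx: "length x = n" and lm: "length m = n"
  shows "V (ea_step n r x m) \<le> V x"
proof (cases "sp x")
  case True then have "sp (ea_step n r x m)" using step_sp lm by blast
  then show ?thesis by (simp add: V_def V_nn)
next
  case ns: False
  let ?y = "map2 (\<noteq>) x m"
  show ?thesis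
  proof (cases "fork n r ?y \<ge> fork n r x")
    case True
    then have e: "ea_step n r x m = ?y" by (simp add: ea_step_def Let_def)
    show ?thesis
    proof (cases "sp ?y")
      case True then show ?thesis using e V_nn[of x] by (simp add: V_def)
    next
      case False
      then have "ones ?y \<ge> ones x" using True ns by (simp add: fork_ns)
      then have "(2::real) ^ (n - ones ?y) \<le> 2 ^ (n - ones x)" by (intro power_increasing) auto
      then show ?thesis using e ns False by (simp add: V_def)
    qed
  next
    case False then have "ea_step n r x m = x" by (simp add: ea_step_def Let_def)
    then show ?thesis by simp
  qed
qed

lemma good_mask:
  assumes lx: "length x = n" and ns: "\<not> sp x"
  shows "\<exists>mg. ppi \<le> pmf (mp n 1) mg \<and> V (ea_step n r x mg) \<le> V x / 2"
proof (cases "ones x < n")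
  case True
  have "\<exists>j<n. \<not> x ! j"
  proof (rule ccontr)
    assume "\<not> ?thesis"
    then have "{i. i < length x \<and> x ! i} = {..<n}" using lx by auto
    then have "ones x = n" by (simp add: ones_card)
    then show False using True by simp
  qed
  then obtain j where j: "j < n" "\<not> x ! j" by auto
  define mg where "mg = map (\<lambda>k. k = j) [0..<n]"
  have lmg: "length mg = n" by (simp add: mg_def)
  let ?y = "map2 (\<noteq>) x mg"
  have ly: "length ?y = n" using lx lmg by simp
  have nmg: "mg ! k = (k = j)" if "k < n" for k
    using that unfolding mg_def by simp
  have ny: "?y ! k = (if k = j then True else x ! k)" if "k < n" for k
  proof -
    have "?y ! k = (x ! k \<noteq> mg ! k)" using that lx lmg by simp
    then show ?thesis using nmg[OF that] j by auto
  qed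
  have "{i. i < length ?y \<and> ?y ! i} = insert j {i. i < length x \<and> x ! i}"
    using nmg j lx ly lmg by auto
  then have oy: "ones ?y = ones x + 1"
    using j by (simp add: ones_card)
  have "fork n r ?y \<ge> fork n r x"
    using fork_ge_ones[OF ly] oy fork_ns[OF ns] by simp
  then have e: "ea_step n r x mg = ?y" by (simp add: ea_step_def Let_def)
  have Vy: "V ?y \<le> V x / 2"
  proof (cases "sp ?y")
    case True then show ?thesis using ns by (simp add: V_def)
  next
    case False
    have "n - ones x = Suc (n - ones ?y)" using oy True by simp
    then show ?thesis using ns False by (simp add: V_def)
  qed
  have pm: "ppi \<le> pmf (mp n 1) mg"
  proof -
    have "pmf (mp n 1) mg = (\<Prod>k<n. pmf (bernoulli_pmf (qq n 1)) (mg ! k))"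
      by (simp add: pmf_mp lmg prod_list_map_nth)
    also have "\<dots> = (\<Prod>k<n. (if k = j then 1 / real n else 1 - 1 / real n))"
      by (intro prod.cong refl) (auto simp: mg_def pmf_bern_n)
    also have "\<dots> = 1 / real n * (\<Prod>k\<in>{..<n} - {j}. (if k = j then 1 / real n else 1 - 1 / real n))"
      using j by (subst prod.remove[of _ j]) auto
    also have "(\<Prod>k\<in>{..<n} - {j}. (if k = j then 1 / real n else 1 - 1 / real n)) = (1 - 1 / real n) ^ (n - 1)"
      using j by (simp add: card_Diff_singleton)
    finally have eq: "pmf (mp n 1) mg = 1 / real n * (1 - 1 / real n) ^ (n - 1)" .
    have a: "0 \<le> 1 - 1 / real n" "1 - 1 / real n \<le> 1" "0 \<le> 1 / real n" "1 / real n \<le> 1"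
      using n_pos by auto
    have "ppi \<le> (1 / real n) ^ 1 * (1 - 1 / real n) ^ (n - 1)"
      unfolding ppi_def
      by (intro mult_mono power_decreasing) (use a r1 in auto)
    then show ?thesis using eq by simp
  qed
  show ?thesis using e Vy pm by auto
next
  case False
  then have on: "ones x = n" using ones_le[of x] lx by simp
  have xall: "x = replicate n True"
  proof (rule nth_equalityI)
    have "{i. i < length x \<and> x ! i} = {..<n}"
      using on lx by (intro card_subset_eq) (auto simp: ones_card)
    then show "\<And>i. i < length x \<Longrightarrow> x ! i = replicate n True ! i" using lx by auto
  qed (simp add: lx)
  define mg where "mg = replicate r True @ replicate (n - r) False"
  have lmg: "length mg = n" using rn by (simp add: mg_def)
  have y: "map2 (\<noteq>) x mg = fA"
  proof (rule nth_equalityI)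
    show "length (map2 (\<noteq>) x mg) = length fA" using lx lmg by simp
    fix i assume "i < length (map2 (\<noteq>) x mg)"
    then have i: "i < n" using lx lmg by simp
    then show "map2 (\<noteq>) x mg ! i = fA ! i"
      using lx lmg by (simp add: xall mg_def nth_append nth_fA)
  qed
  have "fork n r fA \<ge> fork n r x" using fork_ns[OF ns] on by (simp add: fork_eq)
  then have e: "ea_step n r x mg = fA" using y by (simp add: ea_step_def Let_def)
  have V0: "V fA = 0" by (simp add: V_def sp_def)
  have pm: "ppi \<le> pmf (mp n 1) mg"
  proof -
    have eq: "pmf (mp n 1) mg = (1 / real n) ^ r * (1 - 1 / real n) ^ (n - r)"
      by (simp add: pmf_mp lmg) (simp add: mg_def pmf_bern_n)
    have a: "0 \<le> 1 - 1 / real n" "1 - 1 / real n \<le> 1" "0 \<le> 1 / real n"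
      using n_pos by auto
    have "ppi \<le> (1 / real n) ^ r * (1 - 1 / real n) ^ (n - r)"
      unfolding ppi_def by (intro mult_left_mono power_decreasing) (use a in auto)
    then show ?thesis using eq by simp
  qed
  show ?thesis using e V0 pm V_nn[of x] by auto
qed

lemma K_V:
  assumes lx: "length x = n"
  shows "(\<integral>m. V (ea_step n r x m) \<partial>mp n 1) \<le> (1 - ppi/2) * V x"
proof (cases "sp x")
  case True
  have "(\<integral>m. V (ea_step n r x m) \<partial>mp n 1) = (\<integral>m. 0 \<partial>mp n 1)"
  proof (intro integral_cong_AE AE_pmfI)
    fix m assume "m \<in> set_pmf (mp n 1)"
    then have "length m = n" by (rule set_mp)
    then show "V (ea_step n r x m) = 0" using step_sp[OF _ True] by (simp add: V_def)
  qed auto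
  then show ?thesis using True by (simp add: V_def)
next
  case False
  obtain mg where mg: "ppi \<le> pmf (mp n 1) mg" "V (ea_step n r x mg) \<le> V x / 2"
    using good_mask[OF lx False] by blast
  have b1: "\<bar>V x / 2 * indicator {mg} m\<bar> \<le> V x" for m
    using V_nn[of x] by (auto simp: indicator_def)
  have "(\<integral>m. V (ea_step n r x m) \<partial>mp n 1) \<le> (\<integral>m. V x - V x / 2 * indicator {mg} m \<partial>mp n 1)"
  proof (rule integral_mono_AE)
    show "integrable (mp n 1) (\<lambda>m. V (ea_step n r x m))" by (rule intg[where C="2^n"]) (rule V_abs)
    show "integrable (mp n 1) (\<lambda>m. V x - V x / 2 * indicator {mg} m)"
    proof (rule intg[where C="V x"])
      fix m show "\<bar>V x - V x / 2 * indicator {mg} m\<bar> \<le> V x"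
        using V_nn[of x] by (auto simp: indicator_def)
    qed
    show "AE m in mp n 1. V (ea_step n r x m) \<le> V x - V x / 2 * indicator {mg} m"
    proof (rule AE_pmfI)
      fix m assume "m \<in> set_pmf (mp n 1)"
      then have lm: "length m = n" by (rule set_mp)
      show "V (ea_step n r x m) \<le> V x - V x / 2 * indicator {mg} m"
        using mg(2) V_step_le[OF lx lm] by (auto simp: indicator_def)
    qed
  qed
  also have "(\<integral>m. V x - V x / 2 * indicator {mg} m \<partial>mp n 1)
      = (\<integral>m. V x \<partial>mp n 1) - (\<integral>m. V x / 2 * indicator {mg} m \<partial>mp n 1)"
  proof (rule Bochner_Integration.integral_diff)
    show "integrable (mp n 1) (\<lambda>m. V x)" by (rule intg[where C="V x"]) (simp add: V_nn)
    show "integrable (mp n 1) (\<lambda>m. V x / 2 * indicator {mg} m)" by (rule intg[where C="V x"]) (rule b1)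
  qed
  also have "\<dots> = V x - V x / 2 * pmf (mp n 1) mg"
    by (simp add: measure_pmf_single)
  also have "\<dots> \<le> V x - V x / 2 * ppi"
    using mg(1) V_nn[of x] by (simp add: mult_left_mono)
  also have "\<dots> = (1 - ppi/2) * V x" by (simp add: algebra_simps)
  finally show ?thesis .
qed

lemma intV_bd: "\<bar>(\<integral>m. V (ea_step n r x m) \<partial>mp n 1)\<bar> \<le> 2 ^ n"
proof -
  have "(\<integral>m. V (ea_step n r x m) \<partial>mp n 1) \<le> (\<integral>m. 2 ^ n \<partial>mp n 1)"
    by (intro integral_mono intg[where C="2^n"]) (auto simp: V_abs V_le)
  moreover have "0 \<le> (\<integral>m. V (ea_step n r x m) \<partial>mp n 1)" by (simp add: V_nn)
  ultimately show ?thesis by simp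
qed

lemma EV_Suc: "(\<integral>x. V x \<partial>chain n r (Suc t)) \<le> (1 - ppi/2) * (\<integral>x. V x \<partial>chain n r t)"
proof -
  have "(\<integral>x. V x \<partial>chain n r (Suc t)) = (\<integral>x. (\<integral>y. V y \<partial>K x) \<partial>chain n r t)"
    unfolding chain_Suc' by (rule integral_bind_pmf_bounded[where C="2^n"]) (auto simp: V_nn V_le)
  also have "\<dots> = (\<integral>x. (\<integral>m. V (ea_step n r x m) \<partial>mp n 1) \<partial>chain n r t)" by (simp add: K_def)
  also have "\<dots> \<le> (\<integral>x. (1 - ppi/2) * V x \<partial>chain n r t)"
  proof (rule integral_mono_AE)
    show "integrable (chain n r t) (\<lambda>x. \<integral>m. V (ea_step n r x m) \<partial>mp n 1)"
      by (rule intg[where C="2^n"]) (rule intV_bd)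
    show "integrable (chain n r t) (\<lambda>x. (1 - ppi/2) * V x)"
    proof (rule intg[where C="2^n"])
      fix x
      have "\<bar>(1 - ppi/2) * V x\<bar> = (1 - ppi/2) * V x" using ppi_le1 V_nn[of x] by simp
      also have "\<dots> \<le> 1 * 2 ^ n" by (intro mult_mono) (use ppi_nn ppi_le1 V_le[of x] V_nn[of x] in auto)
      finally show "\<bar>(1 - ppi/2) * V x\<bar> \<le> 2 ^ n" by simp
    qed
    show "AE x in chain n r t. (\<integral>m. V (ea_step n r x m) \<partial>mp n 1) \<le> (1 - ppi/2) * V x"
      by (intro AE_pmfI K_V chain_len)
  qed
  also have "\<dots> = (1 - ppi/2) * (\<integral>x. V x \<partial>chain n r t)" by simp
  finally show ?thesis .
qed

lemma EV: "(\<integral>x. V x \<partial>chain n r t) \<le> (1 - ppi/2) ^ t * 2 ^ n"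
proof (induction t)
  case 0
  have "(\<integral>x. V x \<partial>chain n r 0) \<le> (\<integral>x. 2 ^ n \<partial>chain n r 0)"
    by (intro integral_mono intg[where C="2^n"]) (auto simp: V_abs V_le)
  then show ?case by simp
next
  case (Suc t)
  have "(\<integral>x. V x \<partial>chain n r (Suc t)) \<le> (1 - ppi/2) * (\<integral>x. V x \<partial>chain n r t)" by (rule EV_Suc)
  also have "\<dots> \<le> (1 - ppi/2) * ((1 - ppi/2) ^ t * 2 ^ n)"
    by (rule mult_left_mono[OF Suc.IH]) (use ppi_le1 in simp)
  finally show ?case by simp
qed

lemma ns_le: "1 - aa t - bb t \<le> (\<integral>x. V x \<partial>chain n r t)"
proof -
  have ab: "measure (chain n r t) {fA, fB} = aa t + bb t"
    by (simp add: measure_measure_pmf_finite aa_def bb_def)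
  have "measure (chain n r t) (UNIV - {fA, fB}) = 1 - measure (chain n r t) {fA, fB}"
    using measure_pmf.prob_compl[of "{fA, fB}" "chain n r t"] by simp
  moreover have "measure (chain n r t) (UNIV - {fA, fB}) = (\<integral>x. indicator (UNIV - {fA, fB}) x \<partial>chain n r t)"
    by simp
  moreover have "(\<integral>x. indicator (UNIV - {fA, fB}) x \<partial>chain n r t) \<le> (\<integral>x. V x \<partial>chain n r t)"
  proof (intro integral_mono)
    show "integrable (chain n r t) (\<lambda>x. indicator (UNIV - {fA, fB}) x :: real)"
      by (rule intg[where C=1]) (auto simp: indicator_def)
    show "integrable (chain n r t) V" by (rule intg[where C="2^n"]) (rule V_abs)
    fix x show "indicator (UNIV - {fA, fB}) x \<le> V x"
      by (auto simp: indicator_def V_def sp_def V_nn)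
  qed
  ultimately show ?thesis using ab by linarith
qed

end


lemma island_len: "length (island n r \<omega> i t) = n"
  by (induction t) (auto simp: mask_def ea_step_def Let_def)

lemma pow_exp_lower:
  fixes x :: real
  assumes "0 \<le> x" "x \<le> 1/2"
  shows "exp (- 2 * x * k) \<le> (1 - x) ^ k"
proof -
  have "- x - 2 * x\<^sup>2 \<le> ln (1 - x)" by (rule ln_one_minus_pos_lower_bound) (use assms in auto)
  moreover have "2 * x\<^sup>2 \<le> x" using assms by (simp add: power2_eq_square) (metis mult_left_mono mult.commute mult_1 order_trans linorder_not_le not_less less_eq_real_def mult_right_mono le_divide_eq_numeral1(1) mult.left_commute)
  ultimately have l: "- 2 * x \<le> ln (1 - x)" by linarith
  have pos: "0 < 1 - x" using assms by simp
  have "exp (- 2 * x * k) = exp (real k * (- 2 * x))" by (simp add: algebra_simps)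
  also have "\<dots> \<le> exp (real k * ln (1 - x))"
    by (intro exp_mono mult_left_mono l) simp
  also have "\<dots> = (1 - x) ^ k" using pos by (simp add: ln_realpow[symmetric])
  finally show ?thesis .
qed

lemma pow_exp_upper:
  fixes y :: real
  assumes "0 \<le> y" "y \<le> 1"
  shows "(1 - y) ^ k \<le> exp (- y * k)"
proof -
  have "(1 - y) ^ k \<le> exp (- y) ^ k"
    by (intro power_mono) (use assms exp_ge_add_one_self[of "- y"] in auto)
  also have "\<dots> = exp (- y * k)" by (simp add: exp_of_nat_mult[symmetric] algebra_simps)
  finally show ?thesis .
qed

lemma exp_half_le2: "exp (1/2 :: real) \<le> 2"
  using exp_bound_half[of "1/2 :: real"] by simp

lemma exp2_le16: "exp (2 :: real) \<le> 16"
proof -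
  have "exp (2 :: real) = exp (1/2) ^ 4" by (simp add: exp_of_nat_mult[symmetric])
  also have "\<dots> \<le> 2 ^ 4" by (intro power_mono exp_half_le2) simp
  finally show ?thesis by simp
qed

lemma ln2_ge_half: "1/2 \<le> ln (2 :: real)"
  using exp_half_le2 by (subst ln_ge_iff) auto

context fctx begin

lemma island_absorb: "island n r \<omega> i t = fB \<Longrightarrow> island n r \<omega> i (t + k) = fB"
proof (induction k)
  case 0 then show ?case by simp
next
  case (Suc k)
  have "length (mask n \<omega> i (Suc (t + k))) = n" by (simp add: mask_def)
  then show ?case using Suc step_fB by simp
qed

lemma evals_ge:
  assumes "\<exists>i<lam. island n r \<omega> i t0 \<noteq> fB"
  shows "ennreal (real lam * real t0) \<le> total_evals n r lam \<omega>"
proof -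
  from assms obtain i0 where i0: "i0 < lam" "island n r \<omega> i0 t0 \<noteq> fB" by auto
  then have lpos: "0 < lam" by simp
  show ?thesis
  proof (cases "\<exists>t. \<forall>i<lam. island n r \<omega> i t = fork_opt n r")
    case True
    define T where "T = (LEAST t. \<forall>i<lam. island n r \<omega> i t = fork_opt n r)"
    have T: "\<forall>i<lam. island n r \<omega> i T = fB"
      unfolding T_def fork_opt_eq[symmetric] using True by (rule LeastI_ex)
    have "t0 < T"
    proof (rule ccontr)
      assume "\<not> t0 < T"
      then have "island n r \<omega> i0 (T + (t0 - T)) = fB" using T i0 island_absorb by blast
      then show False using i0 \<open>\<not> t0 < T\<close> by simp
    qed
    have "total_evals n r lam \<omega> = ennreal (real lam * real T)"
      using True by (simp add: total_evals_def rounds_all_def T_def ennreal_of_nat_eq_real_of_nat ennreal_mult)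
    moreover have "real lam * real t0 \<le> real lam * real T" using \<open>t0 < T\<close> by (intro mult_left_mono) auto
    ultimately show ?thesis by (simp add: ennreal_leI)
  next
    case False
    then have "total_evals n r lam \<omega> = \<infinity>" using lpos
      by (simp add: total_evals_def rounds_all_def ennreal_mult_eq_top_iff)
    then show ?thesis by simp
  qed
qed

lemma prob_E:
  shows "{\<omega>. \<not> (\<forall>i<lam. island n r \<omega> i t0 = fB)} \<in> sets (noise n)"
    and "emeasure (noise n) {\<omega>. \<not> (\<forall>i<lam. island n r \<omega> i t0 = fB)} = ennreal (1 - bb t0 ^ lam)"
proof -
  define g where "g \<omega> = (\<forall>i<lam. island n r \<omega> i t0 = fB)" for \<omega> :: "nat \<times> nat \<times> nat \<Rightarrow> bool"
  have set_eq: "{\<omega>. \<not> (\<forall>i<lam. island n r \<omega> i t0 = fB)} = {\<omega>. g \<omega> \<in> {False}}"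
    by (simp add: g_def)
  have fin: "finite (blkall n lam t0)" by (simp add: blkall_def)
  have loc: "g \<omega> = g (\<lambda>k. if k \<in> blkall n lam t0 then \<omega> k else False)" for \<omega>
  proof -
    have "island n r \<omega> i t0 = island n r (\<lambda>k. if k \<in> blkall n lam t0 then \<omega> k else False) i t0" if "i < lam" for i
      using that by (intro island_local) (auto simp: blkall_def)
    then show ?thesis by (simp add: g_def)
  qed
  show "{\<omega>. \<not> (\<forall>i<lam. island n r \<omega> i t0 = fB)} \<in> sets (noise n)"
    unfolding set_eq noise_pp by (rule bridge(1)[where J="blkall n lam t0" and g=g, OF fin loc])
  have "emeasure (noise n) {\<omega>. \<not> (\<forall>i<lam. island n r \<omega> i t0 = fB)}
      = emeasure (measure_pmf (Pi_pmf (blkall n lam t0) False (pp n))) {f. g f \<in> {False}}"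
    unfolding set_eq noise_pp by (rule bridge(2)[where J="blkall n lam t0" and g=g, OF fin loc])
  also have "\<dots> = ennreal (measure (measure_pmf (Pi_pmf (blkall n lam t0) False (pp n))) (UNIV - {f. g f}))"
    by (simp add: measure_pmf.emeasure_eq_measure set_diff_eq)
  also have "\<dots> = ennreal (1 - measure (measure_pmf (Pi_pmf (blkall n lam t0) False (pp n))) {f. g f})"
    using measure_pmf.prob_compl[of "{f. g f}" "Pi_pmf (blkall n lam t0) False (pp n)"] by simp
  also have "measure (measure_pmf (Pi_pmf (blkall n lam t0) False (pp n))) {f. g f} = bb t0 ^ lam"
    unfolding g_def bb_def by (rule all_dist)
  finally show "emeasure (noise n) {\<omega>. \<not> (\<forall>i<lam. island n r \<omega> i t0 = fB)} = ennreal (1 - bb t0 ^ lam)" .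
qed

lemma expect_ge:
  "ennreal (real lam * real t0 * (1 - bb t0 ^ lam)) \<le> (\<integral>\<^sup>+ \<omega>. total_evals n r lam \<omega> \<partial>noise n)"
proof -
  let ?E = "{\<omega>. \<not> (\<forall>i<lam. island n r \<omega> i t0 = fB)}"
  have "(\<integral>\<^sup>+ \<omega>. ennreal (real lam * real t0) * indicator ?E \<omega> \<partial>noise n) \<le> (\<integral>\<^sup>+ \<omega>. total_evals n r lam \<omega> \<partial>noise n)"
  proof (rule nn_integral_mono)
    fix \<omega> show "ennreal (real lam * real t0) * indicator ?E \<omega> \<le> total_evals n r lam \<omega>"
      using evals_ge[of lam \<omega> t0] by (auto simp: indicator_def)
  qed
  moreover have "(\<integral>\<^sup>+ \<omega>. ennreal (real lam * real t0) * indicator ?E \<omega> \<partial>noise n) = ennreal (real lam * real t0) * emeasure (noise n) ?E"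
    by (rule nn_integral_cmult_indicator) (rule prob_E(1))
  moreover have "emeasure (noise n) ?E = ennreal (1 - bb t0 ^ lam)" by (rule prob_E(2))
  moreover have "ennreal (real lam * real t0) * ennreal (1 - bb t0 ^ lam) = ennreal (real lam * real t0 * (1 - bb t0 ^ lam))"
  proof -
    have "bb t0 ^ lam \<le> 1" by (intro power_le_one) (auto simp: bb_def pmf_le_1)
    then show ?thesis by (intro ennreal_mult[symmetric]) auto
  qed
  ultimately show ?thesis by simp
qed

lemma aa_s_ge: "(1 - (1 - ppi/2) ^ s * 2 ^ n - 2 * pD * s) / 2 \<le> aa s"
proof -
  have aux: "1 - a1 - b1 \<le> e1 \<Longrightarrow> b1 - a1 \<le> d1 \<Longrightarrow> (1 - e1 - d1) / 2 \<le> (a1::real)" for a1 b1 e1 d1 :: real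
    by (linarith | argo)
  show ?thesis by (rule aux[OF order_trans[OF ns_le EV] diff_le])
qed

lemma bb_le: "bb t \<le> 1 - aa t"
proof -
  have "measure (chain n r t) {fA, fB} = aa t + bb t"
    by (simp add: measure_measure_pmf_finite aa_def bb_def)
  moreover have "measure (chain n r t) {fA, fB} \<le> 1" by simp
  ultimately show ?thesis by simp
qed

lemma ppi_ge: "(1 / real n) ^ r / 16 \<le> ppi"
proof -
  have "exp (- 2) \<le> (1 - 1 / real n) ^ n"
  proof -
    have "exp (- 2 * (1 / real n) * real n) \<le> (1 - 1 / real n) ^ n"
      by (rule pow_exp_lower) (use n_ge in auto)
    then show ?thesis using n_pos by simp
  qed
  moreover have "1 / 16 \<le> exp (- 2 :: real)"
    using exp2_le16 by (simp add: exp_minus field_simps)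
  ultimately have "1 / 16 \<le> (1 - 1 / real n) ^ n" by linarith
  then have "(1 / real n) ^ r * (1/16) \<le> (1 / real n) ^ r * (1 - 1 / real n) ^ n"
    by (intro mult_left_mono) auto
  then show ?thesis by (simp add: ppi_def)
qed

end


context fctx begin

lemma main_bound:
  assumes r2: "2 \<le> r" and nbig: "16384 \<le> n" and l2: "2 \<le> lam"
  shows "ennreal (1/32 * real lam * real n ^ (2*r) * ln (real lam)) \<le> (\<integral>\<^sup>+ \<omega>. total_evals n r lam \<omega> \<partial>noise n)"
proof -
  define x where "x = real n"
  have x16: "16384 \<le> x" using nbig by (simp add: x_def)
  have xpos: "0 < x" using x16 by simp
  define L where "L = ln (real lam)"
  have lampos: "0 < real lam" using l2 by simp
  have "ln 2 \<le> L" unfolding L_def using l2 by (subst ln_le_cancel_iff) auto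
  then have Lh: "1/2 \<le> L" using ln2_ge_half by (linarith | argo)
  have lam_exp: "real lam = exp L" unfolding L_def using lampos by simp
  define N where "N = x ^ (2*r)"
  have xr1: "x \<le> x ^ (r - 1)"
    using power_increasing[of 1 "r - 1" x] r2 x16 by simp
  have Nsplit: "N = x ^ (r + 1) * x ^ (r - 1)"
    unfolding N_def power_add[symmetric] using r2 by (simp add: mult_2)
  have xr1pos: "0 < x ^ (r + 1)" using xpos by simp
  have Nge: "16384 * x ^ (r + 1) \<le> N"
  proof -
    have "16384 \<le> x ^ (r - 1)" using xr1 x16 by (linarith | argo)
    then have "x ^ (r + 1) * 16384 \<le> x ^ (r + 1) * x ^ (r - 1)"
      by (intro mult_left_mono) (use xr1pos in auto)
    then show ?thesis using Nsplit by (simp add: mult.commute)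
  qed
  have N1: "16384 \<le> N"
  proof -
    have "1 \<le> x ^ (r + 1)" using x16 by (intro one_le_power) simp
    then show ?thesis using Nge by (linarith | argo)
  qed
  define t0 where "t0 = nat \<lfloor>N * L / 4\<rfloor>"
  have NL0: "0 \<le> N * L / 4" using N1 Lh by simp
  have t0_eq: "real t0 = real_of_int \<lfloor>N * L / 4\<rfloor>"
    unfolding t0_def using NL0 by (simp add: of_nat_nat)
  have t0_le: "real t0 \<le> N * L / 4" unfolding t0_eq by (rule of_int_floor_le)
  have t0_ge: "N * L / 8 \<le> real t0"
  proof -
    have "N * L / 4 < real t0 + 1" unfolding t0_eq by simp
    moreover have "8 \<le> N * L" using N1 Lh mult_mono[of 16384 N "1/2" L] by simp
    ultimately show ?thesis by simp
  qed
  define s where "s = 128 * n ^ (r + 1)"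
  have s_real: "real s = 128 * x ^ (r + 1)" by (simp add: s_def x_def)
  have F1: "(1 - ppi/2) ^ s * 2 ^ n \<le> 1/8"
  proof -
    have p16: "(1 / x) ^ r / 16 \<le> ppi" using ppi_ge by (simp add: x_def)
    have y0: "0 \<le> ppi/2" "ppi/2 \<le> 1" using ppi_nn ppi_le1 by auto
    have "(1 / x) ^ r * x ^ (r + 1) = x" using xpos by (simp add: power_one_over field_simps)
    then have ys: "4 * x \<le> ppi/2 * real s"
    proof -
      assume e: "(1 / x) ^ r * x ^ (r + 1) = x"
      have "4 * x = ((1 / x) ^ r / 16) / 2 * (128 * x ^ (r + 1))" using e by (simp add: field_simps)
      also have "\<dots> \<le> ppi / 2 * (128 * x ^ (r + 1))"
        by (intro mult_right_mono divide_right_mono p16) (use xr1pos in auto)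
      finally show ?thesis using s_real by simp
    qed
    have "(1 - ppi/2) ^ s \<le> exp (- (ppi/2) * real s)" by (rule pow_exp_upper) (use y0 in auto)
    also have "\<dots> \<le> exp (- 4 * x)" using ys by simp
    finally have a: "(1 - ppi/2) ^ s \<le> exp (- 4 * x)" .
    have "(2::real) ^ n \<le> exp 1 ^ n"
      by (intro power_mono) (use exp_ge_add_one_self[of "1::real"] in auto)
    also have "\<dots> = exp x" by (simp add: x_def exp_of_nat_mult[symmetric])
    finally have b: "(2::real) ^ n \<le> exp x" .
    have "(1 - ppi/2) ^ s * 2 ^ n \<le> exp (- 4 * x) * exp x"
      by (intro mult_mono a b) (use y0 in auto)
    also have "\<dots> = exp (- (3 * x))" by (simp add: exp_add[symmetric])
    also have "\<dots> = 1 / exp (3 * x)" by (simp add: exp_minus field_simps)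
    also have "\<dots> \<le> 1 / 8"
    proof -
      have "8 \<le> 1 + 3 * x" using x16 by simp
      also have "\<dots> \<le> exp (3 * x)" by (rule exp_ge_add_one_self)
      finally show ?thesis by (simp add: field_simps)
    qed
    finally show ?thesis .
  qed
  have pDN: "pD \<le> 1 / N" using pD_le by (simp add: N_def x_def power_one_over)
  have F2: "2 * pD * real s \<le> 1/8"
  proof -
    have "2 * pD * real s \<le> 2 * (1 / N) * real s"
      by (intro mult_right_mono mult_left_mono pDN) auto
    also have "\<dots> = 256 * x ^ (r + 1) / N" using s_real by simp
    also have "\<dots> \<le> 256 * x ^ (r + 1) / (16384 * x ^ (r + 1))"
      by (intro divide_left_mono Nge) (use xr1pos N1 in auto)
    also have "\<dots> \<le> 1/8" using xr1pos by simp
    finally show ?thesis .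
  qed
  have F3: "s \<le> t0"
  proof -
    have "real s \<le> N * L / 8"
    proof -
      have "real s = 128 * x ^ (r + 1)" by (rule s_real)
      also have "\<dots> \<le> 16384 * x ^ (r + 1) * (1/2) / 8" using xr1pos by simp
      also have "\<dots> \<le> N * L / 8"
        by (intro divide_right_mono mult_mono Nge Lh) (use xr1pos N1 in auto)
      finally show ?thesis .
    qed
    then have "real s \<le> real t0" using t0_ge by (linarith | argo)
    then show ?thesis by simp
  qed
  have aux38: "(1 - e1 - d1) / 2 \<le> a1 \<Longrightarrow> e1 \<le> 1/8 \<Longrightarrow> d1 \<le> 1/8 \<Longrightarrow> 3/8 \<le> a1" for a1 e1 d1 :: real
    by (linarith | argo)
  have as: "3/8 \<le> aa s" by (rule aux38[OF aa_s_ge[of s] F1 F2])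
  have pdN: "0 \<le> 1 - 1 / N" "1 - 1 / N \<le> 1 - pD" "1 - 1/N \<le> 1" "1/N \<le> 1/2"
    using pDN N1 by auto
  have "exp (- L / 2) \<le> exp (- 2 * (1 / N) * real t0)"
  proof (rule exp_le_cancel_iff[THEN iffD2])
    have "2 * (1 / N) * real t0 \<le> 2 * (1 / N) * (N * L / 4)"
      by (intro mult_left_mono t0_le) (use N1 in auto)
    also have "\<dots> = L / 2" using N1 by (simp add: field_simps)
    finally show "- L / 2 \<le> - 2 * (1 / N) * real t0" by simp
  qed
  also have "\<dots> \<le> (1 - 1 / N) ^ t0" by (rule pow_exp_lower) (use pdN N1 in auto)
  also have "\<dots> \<le> (1 - 1 / N) ^ (t0 - s)"
    by (rule power_decreasing) (use pdN in auto)
  also have "\<dots> \<le> (1 - pD) ^ (t0 - s)"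
    by (rule power_mono) (use pdN in auto)
  finally have ex: "exp (- L / 2) \<le> (1 - pD) ^ (t0 - s)" .
  have q: "3/8 * exp (- L / 2) \<le> aa t0"
  proof -
    have "3/8 * exp (- L / 2) \<le> aa s * (1 - pD) ^ (t0 - s)"
      by (intro mult_mono as ex) (use pD_le1 aa_nn in auto)
    also have "\<dots> \<le> aa (s + (t0 - s))" using aa_add[of "t0 - s" s] by (simp add: mult.commute)
    also have "s + (t0 - s) = t0" using F3 by simp
    finally show ?thesis .
  qed
  have lamq: "3/8 \<le> aa t0 * real lam"
  proof -
    have "3/8 * exp (- L / 2) * real lam = 3/8 * exp (L / 2)"
      unfolding lam_exp by (simp add: exp_add[symmetric])
    moreover have "1 \<le> exp (L / 2)" using Lh by simp
    moreover have "3/8 * exp (- L / 2) * real lam \<le> aa t0 * real lam"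
      by (intro mult_right_mono q) simp
    ultimately show ?thesis by (linarith | argo)
  qed
  have bbq: "bb t0 ^ lam \<le> 3/4"
  proof -
    have "bb t0 ^ lam \<le> (1 - aa t0) ^ lam"
      by (intro power_mono bb_le) (simp add: bb_def)
    also have "\<dots> \<le> exp (- aa t0 * real lam)" by (rule pow_exp_upper) (use aa_nn aa_le1 in auto)
    also have "\<dots> \<le> exp (- (3/8))" using lamq by simp
    also have "\<dots> \<le> 3/4"
    proof -
      have "4/3 \<le> 1 + (3/8::real)" by simp
      also have "\<dots> \<le> exp (3/8)" by (rule exp_ge_add_one_self)
      finally show ?thesis by (simp add: exp_minus field_simps)
    qed
    finally show ?thesis .
  qed
  have "1/32 * real lam * N * L \<le> real lam * real t0 * (1 - bb t0 ^ lam)"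
  proof -
    have "1/32 * real lam * N * L = real lam * (N * L / 8) * (1/4)" by simp
    also have "\<dots> \<le> real lam * real t0 * (1 - bb t0 ^ lam)"
      by (intro mult_mono mult_left_mono t0_ge) (use bbq NL0 in auto)
    finally show ?thesis .
  qed
  then have "ennreal (1/32 * real lam * real n ^ (2*r) * ln (real lam)) \<le> ennreal (real lam * real t0 * (1 - bb t0 ^ lam))"
    by (intro ennreal_leI) (simp add: N_def x_def L_def)
  also have "\<dots> \<le> (\<integral>\<^sup>+ \<omega>. total_evals n r lam \<omega> \<partial>noise n)" by (rule expect_ge)
  finally show ?thesis .
qed

end

theorem corollary3:
  fixes r :: nat
  assumes "r \<ge> 2"
  shows "\<exists>c > 0. \<exists>n0. \<forall>n \<ge> n0. \<forall>lam :: nat. 1 \<le> lam \<longrightarrow> lam \<le> n ^ r \<longrightarrow>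
           (\<integral>\<^sup>+ \<omega>. total_evals n r lam \<omega> \<partial>noise n)
             \<ge> ennreal (c * real lam * real n ^ (2 * r) * ln (real lam))"
proof (intro exI conjI allI impI)
  show "(0::real) < 1/32" by simp
  fix n lam :: nat
  assume n: "max 16384 (2 * r + 1) \<le> n" and l1: "1 \<le> lam" and "lam \<le> n ^ r"
  show "ennreal (1/32 * real lam * real n ^ (2 * r) * ln (real lam)) \<le> (\<integral>\<^sup>+ \<omega>. total_evals n r lam \<omega> \<partial>noise n)"
  proof (cases "lam = 1")
    case True then show ?thesis by simp
  next
    case False
    then have l2: "2 \<le> lam" using l1 by simp
    interpret fctx n r by unfold_locales (use assms n in auto)
    show ?thesis by (rule main_bound) (use assms n l2 in auto)
  qed
qed


end
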